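(* Let $uv\in E(G)$. If $\phi$ is a cheapest $(T_1,T_2)$-extension of $G - {uv}$ and $u$ and $v$ are in the same good component of $\phi$, then $uv$ is irrelevant.
   Context: $(G,k,t,T_1,T_2)$ is an instance of the Cheap Coloring Extension problem: $G$ is a bipartite graph, $T_1,T_2$ are disjoint vertex sets with $|T_1|+|T_2|\le t$, and one asks for a $(T_1,T_2)$-extension of cost at most $k$. A 2-coloring of $G$ is any function $\phi: V(G)\to\{1,2\}$; it is a $(T_1,T_2)$-extension if it colors $T_1$ with 1 and $T_2$ with 2. Its cost is $\sum_X(|X|-1)$ over the monochromatic components $X$ (connected components of the subgraphs induced by each color class). A $(T_1,T_2)$-extension is cheapest if no $(T_1,T_2)$-extension has strictly lower cost. An edge $uv$ is good w.r.t. $\phi$ if $\phi(u)\neq\phi(v)$ and bad otherwise; a good component of $\phi$ is the vertex set of a connected component of the graph $(V(G),E')$ where $E'$ is the set of good edges. An edge $e$ is irrelevant if $G$ has a $(T_1,T_2)$-extension of cost at most $k$ if and only if $G-e$ does. *)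

theory Defs
  imports Main
begin

definition simple_graph :: "'a set \<Rightarrow> 'a set set \<Rightarrow> bool" where
  "simple_graph V E \<longleftrightarrow> finite V \<and>
     (\<forall>e\<in>E. \<exists>x y. e = {x, y} \<and> x \<noteq> y \<and> x \<in> V \<and> y \<in> V)"

definition bipartite :: "'a set \<Rightarrow> 'a set set \<Rightarrow> bool" where
  "bipartite V E \<longleftrightarrow> (\<exists>A. A \<subseteq> V \<and>
     (\<forall>e\<in>E. \<exists>x y. e = {x, y} \<and> (x \<in> A \<longleftrightarrow> y \<notin> A)))"

definition reach :: "'a set \<Rightarrow> 'a set set \<Rightarrow> 'a \<Rightarrow> 'a \<Rightarrow> bool" where
  "reach V E x y \<longleftrightarrow>
     (x, y) \<in> {(a, b). a \<in> V \<and> b \<in> V \<and> {a, b} \<in> E}\<^sup>*"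

definition components :: "'a set \<Rightarrow> 'a set set \<Rightarrow> 'a set set" where
  "components V E = {{y \<in> V. reach V E x y} | x. x \<in> V}"

definition two_coloring :: "'a set \<Rightarrow> ('a \<Rightarrow> nat) \<Rightarrow> bool" where
  "two_coloring V \<phi> \<longleftrightarrow> (\<forall>x\<in>V. \<phi> x \<in> {1, 2})"

definition extension :: "'a set \<Rightarrow> 'a set \<Rightarrow> 'a set \<Rightarrow> ('a \<Rightarrow> nat) \<Rightarrow> bool" where
  "extension V T1 T2 \<phi> \<longleftrightarrow> two_coloring V \<phi> \<and>
     (\<forall>x\<in>T1. \<phi> x = 1) \<and> (\<forall>x\<in>T2. \<phi> x = 2)"

definition bad_edges :: "'a set set \<Rightarrow> ('a \<Rightarrow> nat) \<Rightarrow> 'a set set" where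
  "bad_edges E \<phi> = {e \<in> E. \<exists>x y. e = {x, y} \<and> \<phi> x = \<phi> y}"

definition good_edges :: "'a set set \<Rightarrow> ('a \<Rightarrow> nat) \<Rightarrow> 'a set set" where
  "good_edges E \<phi> = {e \<in> E. \<exists>x y. e = {x, y} \<and> \<phi> x \<noteq> \<phi> y}"

(* monochromatic components: components of the subgraphs induced by the color
   classes, i.e. the components of (V, bad edges) *)
definition mono_components :: "'a set \<Rightarrow> 'a set set \<Rightarrow> ('a \<Rightarrow> nat) \<Rightarrow> 'a set set" where
  "mono_components V E \<phi> = components V (bad_edges E \<phi>)"

definition good_components :: "'a set \<Rightarrow> 'a set set \<Rightarrow> ('a \<Rightarrow> nat) \<Rightarrow> 'a set set" where
  "good_components V E \<phi> = components V (good_edges E \<phi>)"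

definition cost :: "'a set \<Rightarrow> 'a set set \<Rightarrow> ('a \<Rightarrow> nat) \<Rightarrow> nat" where
  "cost V E \<phi> = (\<Sum>X\<in>mono_components V E \<phi>. card X - 1)"

definition cheapest_extension ::
  "'a set \<Rightarrow> 'a set set \<Rightarrow> 'a set \<Rightarrow> 'a set \<Rightarrow> ('a \<Rightarrow> nat) \<Rightarrow> bool" where
  "cheapest_extension V E T1 T2 \<phi> \<longleftrightarrow> extension V T1 T2 \<phi> \<and>
     (\<forall>\<psi>. extension V T1 T2 \<psi> \<longrightarrow> cost V E \<phi> \<le> cost V E \<psi>)"

definition has_cheap_extension ::
  "'a set \<Rightarrow> 'a set set \<Rightarrow> 'a set \<Rightarrow> 'a set \<Rightarrow> nat \<Rightarrow> bool" where
  "has_cheap_extension V E T1 T2 k \<longleftrightarrow> (\<exists>\<phi>. extension V T1 T2 \<phi> \<and> cost V E \<phi> \<le> k)"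

definition irrelevant ::
  "'a set \<Rightarrow> 'a set set \<Rightarrow> 'a set \<Rightarrow> 'a set \<Rightarrow> nat \<Rightarrow> 'a set \<Rightarrow> bool" where
  "irrelevant V E T1 T2 k e \<longleftrightarrow>
     (has_cheap_extension V E T1 T2 k \<longleftrightarrow> has_cheap_extension V (E - {e}) T1 T2 k)"

end

theory Submission
  imports Defs
begin

definition rel :: "'a set \<Rightarrow> 'a set set \<Rightarrow> ('a \<times> 'a) set" where
  "rel V F = {(a, b). a \<in> V \<and> b \<in> V \<and> {a, b} \<in> F}"

lemma reach_rel: "reach V F x y \<longleftrightarrow> (x, y) \<in> (rel V F)\<^sup>*"
  by (simp add: reach_def rel_def)

lemma rel_conv: "(rel V F)\<inverse> = rel V F"
  by (auto simp: rel_def insert_commute)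

lemma reach_sym: "reach V F x y \<Longrightarrow> reach V F y x"
proof -
  assume "reach V F x y"
  then have "(y, x) \<in> ((rel V F)\<inverse>)\<^sup>*"
    by (simp add: reach_rel rtrancl_converseI)
  then show ?thesis by (simp add: reach_rel rel_conv)
qed

lemma reach_trans: "reach V F x y \<Longrightarrow> reach V F y z \<Longrightarrow> reach V F x z"
  by (simp add: reach_rel)

lemma reach_mono: "F1 \<subseteq> F2 \<Longrightarrow> reach V F1 x y \<Longrightarrow> reach V F2 x y"
proof -
  assume "F1 \<subseteq> F2" "reach V F1 x y"
  moreover have "rel V F1 \<subseteq> rel V F2" using \<open>F1 \<subseteq> F2\<close> by (auto simp: rel_def)
  ultimately show ?thesis unfolding reach_rel using rtrancl_mono by blast
qed

definition comp :: "'a set \<Rightarrow> 'a set set \<Rightarrow> 'a \<Rightarrow> 'a set" where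
  "comp V F x = {y \<in> V. reach V F x y}"

lemma components_img: "components V F = comp V F ` V"
  by (auto simp: components_def comp_def)

lemma comp_eq: "reach V F x y \<Longrightarrow> comp V F x = comp V F y"
proof -
  assume r: "reach V F x y"
  have "reach V F x z \<longleftrightarrow> reach V F y z" for z
    using reach_trans[OF r, of z] reach_trans[OF reach_sym[OF r], of z] by blast
  then show ?thesis unfolding comp_def by simp
qed

lemma comp_self: "x \<in> V \<Longrightarrow> x \<in> comp V F x"
  by (simp add: comp_def reach_def)

lemma cost_formula:
  assumes "finite V"
  shows "(\<Sum>X\<in>components V F. card X - 1) = card V - card (components V F)"
proof -
  let ?C = "components V F"
  have finC: "finite ?C" using assms by (simp add: components_img)
  have sub: "\<And>X. X \<in> ?C \<Longrightarrow> X \<subseteq> V" by (auto simp: components_img comp_def)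
  have fin: "\<And>X. X \<in> ?C \<Longrightarrow> finite X" using sub assms finite_subset by blast
  have ne: "\<And>X. X \<in> ?C \<Longrightarrow> 1 \<le> card X"
  proof -
    fix X assume "X \<in> ?C"
    then obtain x where "x \<in> V" "X = comp V F x" by (auto simp: components_img)
    then have "x \<in> X" by (simp add: comp_self)
    then have "card X \<noteq> 0" using fin[OF \<open>X \<in> ?C\<close>] by auto
    then show "1 \<le> card X" by simp
  qed
  have un: "\<Union>?C = V"
  proof
    show "\<Union>?C \<subseteq> V" using sub by blast
    show "V \<subseteq> \<Union>?C" unfolding components_img
    proof
      fix y assume "y \<in> V"
      then have "y \<in> comp V F y" by (rule comp_self)
      then show "y \<in> \<Union>(comp V F ` V)" using \<open>y \<in> V\<close> by blast
    qed
  qed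
  have disj: "\<And>X Y. X \<in> ?C \<Longrightarrow> Y \<in> ?C \<Longrightarrow> X \<noteq> Y \<Longrightarrow> X \<inter> Y = {}"
  proof -
    fix X Y assume "X \<in> ?C" "Y \<in> ?C" "X \<noteq> Y"
    then obtain x y where xy: "X = comp V F x" "Y = comp V F y" by (auto simp: components_img)
    show "X \<inter> Y = {}"
    proof (rule ccontr)
      assume "X \<inter> Y \<noteq> {}"
      then obtain z where "z \<in> X" "z \<in> Y" by blast
      then have "reach V F x z" "reach V F y z" using xy by (auto simp: comp_def)
      then have "reach V F x y" using reach_trans[OF \<open>reach V F x z\<close> reach_sym[OF \<open>reach V F y z\<close>]] by simp
      then show False using comp_eq[OF \<open>reach V F x y\<close>] xy \<open>X \<noteq> Y\<close> by simp
    qed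
  qed
  have "(\<Sum>X\<in>?C. card X - 1) = (\<Sum>X\<in>?C. card X) - (\<Sum>X\<in>?C. 1)"
    by (rule sum_subtractf_nat) (rule ne)
  also have "(\<Sum>X\<in>?C. card X) = card V"
  proof -
    have "pairwise disjnt ?C" unfolding pairwise_def disjnt_def using disj by blast
    then have "card (\<Union>?C) = (\<Sum>X\<in>?C. card X)" using card_Union_disjoint fin by blast
    then show ?thesis using un by simp
  qed
  finally show ?thesis by simp
qed

lemma card_comp_mono:
  assumes "finite V" "F1 \<subseteq> F2"
  shows "card (components V F2) \<le> card (components V F1)"
proof -
  define g where "g C = comp V F2 (SOME x. x \<in> C)" for C
  have "g ` components V F1 = components V F2"
  proof
    show "g ` components V F1 \<subseteq> components V F2"
    proof
      fix Z assume "Z \<in> g ` components V F1"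
      then obtain x where x: "x \<in> V" "Z = g (comp V F1 x)" by (auto simp: components_img)
      have "x \<in> comp V F1 x" using x comp_self by metis
      then have "(SOME y. y \<in> comp V F1 x) \<in> comp V F1 x" by (rule someI)
      then have "(SOME y. y \<in> comp V F1 x) \<in> V" by (simp add: comp_def)
      then show "Z \<in> components V F2" using x by (simp add: g_def components_img)
    qed
  next
    show "components V F2 \<subseteq> g ` components V F1"
    proof
      fix Z assume "Z \<in> components V F2"
      then obtain x where x: "x \<in> V" "Z = comp V F2 x" by (auto simp: components_img)
      have "x \<in> comp V F1 x" using x comp_self by metis
      then have "(SOME y. y \<in> comp V F1 x) \<in> comp V F1 x" by (rule someI)
      then have "reach V F2 x (SOME y. y \<in> comp V F1 x)"
        using reach_mono assms(2) by (auto simp: comp_def)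
      then have "comp V F2 x = comp V F2 (SOME y. y \<in> comp V F1 x)" by (rule comp_eq)
      then have "g (comp V F1 x) = Z" using x by (simp add: g_def)
      then show "Z \<in> g ` components V F1" using x by (auto simp: components_img)
    qed
  qed
  moreover have "finite (components V F1)" using assms by (simp add: components_img)
  ultimately show ?thesis using card_image_le[of "components V F1" g] by simp
qed

lemma cost_mono:
  assumes "finite V"
  shows "cost V (E - {e}) \<psi> \<le> cost V E \<psi>"
proof -
  have "bad_edges (E - {e}) \<psi> \<subseteq> bad_edges E \<psi>" by (auto simp: bad_edges_def)
  then have "card (components V (bad_edges E \<psi>)) \<le> card (components V (bad_edges (E - {e}) \<psi>))"
    using card_comp_mono assms by blast
  then show ?thesis
    unfolding cost_def mono_components_def cost_formula[OF assms] by (rule diff_le_mono2)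
qed

theorem mainTheorem6:
  fixes V :: "'a set" and E :: "'a set set" and T1 T2 :: "'a set"
    and k t :: nat and u v :: 'a and \<phi> :: "'a \<Rightarrow> nat"
  assumes "simple_graph V E" and "bipartite V E"
    and "T1 \<subseteq> V" and "T2 \<subseteq> V" and "T1 \<inter> T2 = {}"
    and "card T1 + card T2 \<le> t"
    and "{u, v} \<in> E"
    and "cheapest_extension V (E - {{u, v}}) T1 T2 \<phi>"
    and "\<exists>X\<in>good_components V (E - {{u, v}}) \<phi>. u \<in> X \<and> v \<in> X"
  shows "irrelevant V E T1 T2 k {u, v}"
proof -
  let ?E' = "E - {{u, v}}"
  have finV: "finite V" using assms(1) by (simp add: simple_graph_def)
  obtain A where A: "\<forall>e\<in>E. \<exists>x y. e = {x, y} \<and> (x \<in> A \<longleftrightarrow> y \<notin> A)"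
    using assms(2) by (auto simp: bipartite_def)
  have Acr: "{a, b} \<in> E \<Longrightarrow> (a \<in> A \<longleftrightarrow> b \<notin> A)" for a b
  proof -
    assume "{a, b} \<in> E"
    then obtain p q where "{a, b} = {p, q}" "p \<in> A \<longleftrightarrow> q \<notin> A" using A by blast
    then show ?thesis by (auto simp: doubleton_eq_iff)
  qed
  have ext: "extension V T1 T2 \<phi>" using assms(8) by (simp add: cheapest_extension_def)
  have col: "x \<in> V \<Longrightarrow> \<phi> x = 1 \<or> \<phi> x = 2" for x
    using ext by (auto simp: extension_def two_coloring_def)
  obtain X where X: "X \<in> good_components V ?E' \<phi>" "u \<in> X" "v \<in> X" using assms(9) by blast
  then obtain x where x: "x \<in> V" "X = comp V (good_edges ?E' \<phi>) x"
    by (auto simp: good_components_def components_img)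
  have inv: "(x, y) \<in> (rel V (good_edges ?E' \<phi>))\<^sup>* \<Longrightarrow>
      ((y \<in> A \<longleftrightarrow> x \<in> A) \<longleftrightarrow> \<phi> y = \<phi> x)" for y
  proof (induction rule: rtrancl_induct)
    case base then show ?case by simp
  next
    case (step a b)
    then have ab: "a \<in> V" "b \<in> V" "{a, b} \<in> good_edges ?E' \<phi>" by (auto simp: rel_def)
    then have "\<phi> a \<noteq> \<phi> b" "{a, b} \<in> E"
      by (auto simp: good_edges_def doubleton_eq_iff)
    moreover have "a \<in> A \<longleftrightarrow> b \<notin> A" using Acr calculation(2) by blast
    ultimately have "\<phi> b = \<phi> x \<longleftrightarrow> \<phi> a \<noteq> \<phi> x"
      using col[OF ab(1)] col[OF ab(2)] col[OF x(1)] by auto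
    then show ?case using step.IH \<open>a \<in> A \<longleftrightarrow> b \<notin> A\<close> by argo
  qed
  have "reach V (good_edges ?E' \<phi>) x u" "reach V (good_edges ?E' \<phi>) x v"
    using X x by (auto simp: comp_def)
  then have iu: "(u \<in> A \<longleftrightarrow> x \<in> A) \<longleftrightarrow> \<phi> u = \<phi> x"
    and iv: "(v \<in> A \<longleftrightarrow> x \<in> A) \<longleftrightarrow> \<phi> v = \<phi> x"
    using inv by (auto simp: reach_rel)
  have uv: "u \<in> V" "v \<in> V" using X x by (auto simp: comp_def)
  have "u \<in> A \<longleftrightarrow> v \<notin> A" using Acr assms(7) by blast
  moreover have "\<phi> u = \<phi> x \<longleftrightarrow> \<phi> v \<noteq> \<phi> x \<Longrightarrow> \<phi> u \<noteq> \<phi> v" by auto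
  ultimately have neq: "\<phi> u \<noteq> \<phi> v" using iu iv by argo
  have "bad_edges E \<phi> = bad_edges ?E' \<phi>"
    using neq by (auto simp: bad_edges_def doubleton_eq_iff)
  then have ceq: "cost V E \<phi> = cost V ?E' \<phi>" by (simp add: cost_def mono_components_def)
  show ?thesis
    unfolding irrelevant_def has_cheap_extension_def
  proof
    assume "\<exists>\<psi>. extension V T1 T2 \<psi> \<and> cost V E \<psi> \<le> k"
    then show "\<exists>\<psi>. extension V T1 T2 \<psi> \<and> cost V ?E' \<psi> \<le> k"
      using cost_mono[OF finV] le_trans by blast
  next
    assume "\<exists>\<psi>. extension V T1 T2 \<psi> \<and> cost V ?E' \<psi> \<le> k"
    then obtain \<psi> where "extension V T1 T2 \<psi>" "cost V ?E' \<psi> \<le> k" by blast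
    moreover have "cost V ?E' \<phi> \<le> cost V ?E' \<psi>"
      using assms(8) calculation(1) by (simp add: cheapest_extension_def)
    ultimately have "cost V E \<phi> \<le> k" using ceq by simp
    then show "\<exists>\<psi>. extension V T1 T2 \<psi> \<and> cost V E \<psi> \<le> k" using ext by blast
  qed
qed

end
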